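(* In the replace-after-fixed-time process with parameters $\lambda>0$, $r>0$, for $j\in\{0,1,2,\ldots\}$ and $jr\le t<(j+1)r$, \[ E[A(t)]=\sum_{m=1}^{j}e^{-\lambda m r}\big(1+\lambda(t-mr)\big), \] (the empty sum being $0$ when $j=0$).
   Context: Let $X_1,X_2,\ldots$ be independent random variables, each exponentially distributed with rate $\lambda>0$ (density $\lambda e^{-\lambda x}$ for $x>0$). Fix $r>0$ and set $Y_k=\min(X_k,r)$. For $t\ge 0$ let $N(t)=\max\{n\ge 0:\sum_{k=1}^n Y_k\le t\}$ (the replace-after-fixed-time, or RaFT, process). Write $N(t)=A(t)+D(t)$, where $A(t)=\#\{k\le N(t): X_k>r\}$ (components replaced while still functioning) and $D(t)=\#\{k\le N(t): X_k\le r\}$ (components replaced because they failed). *)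

theory Defs
  imports "HOL-Probability.Probability"
begin

text \<open>RaFT process. X k (k \<ge> 1) are the lifetimes; Y_k = min(X_k, r).\<close>

definition raft_Y :: "(nat \<Rightarrow> 'a \<Rightarrow> real) \<Rightarrow> real \<Rightarrow> nat \<Rightarrow> 'a \<Rightarrow> real" where
  "raft_Y X r k \<omega> = min (X k \<omega>) r"

definition raft_N :: "(nat \<Rightarrow> 'a \<Rightarrow> real) \<Rightarrow> real \<Rightarrow> real \<Rightarrow> 'a \<Rightarrow> nat" where
  "raft_N X r t \<omega> = (GREATEST n. (\<Sum>k=1..n. raft_Y X r k \<omega>) \<le> t)"

definition raft_A :: "(nat \<Rightarrow> 'a \<Rightarrow> real) \<Rightarrow> real \<Rightarrow> real \<Rightarrow> 'a \<Rightarrow> nat" where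
  "raft_A X r t \<omega> = card {k \<in> {1..raft_N X r t \<omega>}. X k \<omega> > r}"

definition raft_D :: "(nat \<Rightarrow> 'a \<Rightarrow> real) \<Rightarrow> real \<Rightarrow> real \<Rightarrow> 'a \<Rightarrow> nat" where
  "raft_D X r t \<omega> = card {k \<in> {1..raft_N X r t \<omega>}. X k \<omega> \<le> r}"

end

theory Submission
  imports Defs
begin

locale raft = prob_space M for M :: "'a measure" +
  fixes X :: "nat \<Rightarrow> 'a \<Rightarrow> real" and l r :: real
  assumes l: "l > 0" and r: "r > 0"
    and ind: "indep_vars (\<lambda>_. borel) X {1::nat..}"
    and dist: "\<And>k. k \<ge> 1 \<Longrightarrow> distributed M lborel (X k) (exponential_density l)"
begin

definition S :: "nat \<Rightarrow> 'a \<Rightarrow> real" where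
  "S n \<omega> = (\<Sum>i=1..n. min (X i \<omega>) r)"

lemma Xm: "k \<ge> 1 \<Longrightarrow> X k \<in> borel_measurable M"
  using dist distributed_measurable by fastforce

lemma Sm[measurable]: "S n \<in> borel_measurable M"
  unfolding S_def by (intro borel_measurable_sum borel_measurable_min Xm) auto

lemma S_Suc: "S (Suc n) \<omega> = S n \<omega> + min (X (Suc n) \<omega>) r"
  unfolding S_def by simp

lemma S_0[simp]: "S 0 \<omega> = 0"
  unfolding S_def by simp

lemma indep_XS: "indep_var borel (X (Suc k)) borel (S k)"
proof -
  have "indep_var
    borel ((\<lambda>f. f (Suc k)) \<circ> (\<lambda>\<omega>. restrict (\<lambda>i. X i \<omega>) {Suc k}))
    borel ((\<lambda>f. \<Sum>i=1..k. min (f i) r) \<circ> (\<lambda>\<omega>. restrict (\<lambda>i. X i \<omega>) {1..k}))"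
    by (intro indep_var_compose[OF indep_var_restrict[OF ind]]) auto
  also have "((\<lambda>f. f (Suc k)) \<circ> (\<lambda>\<omega>. restrict (\<lambda>i. X i \<omega>) {Suc k})) = X (Suc k)"
    by auto
  also have "((\<lambda>f. \<Sum>i=1..k. min (f i) r) \<circ> (\<lambda>\<omega>. restrict (\<lambda>i. X i \<omega>) {1..k})) = S k"
    by (auto simp: S_def fun_eq_iff)
  finally show ?thesis .
qed

lemma indep_pair_nn:
  fixes f :: "real \<Rightarrow> real \<Rightarrow> ennreal"
  assumes ind: "indep_var borel U borel Z"
    and f[measurable]: "case_prod f \<in> borel_measurable (borel \<Otimes>\<^sub>M borel)"
  shows "(\<integral>\<^sup>+\<omega>. f (U \<omega>) (Z \<omega>) \<partial>M) = (\<integral>\<^sup>+\<omega>. (\<integral>\<^sup>+\<omega>'. f (U \<omega>') (Z \<omega>) \<partial>M) \<partial>M)"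
proof -
  have rv: "random_variable borel U" "random_variable borel Z"
    and eq: "distr M borel U \<Otimes>\<^sub>M distr M borel Z = distr M (borel \<Otimes>\<^sub>M borel) (\<lambda>x. (U x, Z x))"
    using ind unfolding indep_var_distribution_eq by auto
  note [measurable] = rv
  interpret U: prob_space "distr M borel U" by (rule prob_space_distr) fact
  interpret Z: prob_space "distr M borel Z" by (rule prob_space_distr) fact
  interpret UZ: pair_prob_space "distr M borel U" "distr M borel Z" ..
  have "(\<integral>\<^sup>+\<omega>. f (U \<omega>) (Z \<omega>) \<partial>M) = (\<integral>\<^sup>+p. case_prod f p \<partial>distr M (borel \<Otimes>\<^sub>M borel) (\<lambda>x. (U x, Z x)))"
    by (subst nn_integral_distr) auto
  also have "\<dots> = (\<integral>\<^sup>+p. case_prod f p \<partial>(distr M borel U \<Otimes>\<^sub>M distr M borel Z))"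
    by (simp add: eq)
  also have "\<dots> = (\<integral>\<^sup>+ z. (\<integral>\<^sup>+ x. f x z \<partial>distr M borel U) \<partial>distr M borel Z)"
    by (subst UZ.nn_integral_snd[symmetric]) (auto simp: measurable_distr_eq1 measurable_distr_eq2)
  also have "\<dots> = (\<integral>\<^sup>+ z. (\<integral>\<^sup>+ \<omega>'. f (U \<omega>') z \<partial>M) \<partial>distr M borel Z)"
    by (intro nn_integral_cong) (subst nn_integral_distr, auto)
  also have "\<dots> = (\<integral>\<^sup>+\<omega>. (\<integral>\<^sup>+\<omega>'. f (U \<omega>') (Z \<omega>) \<partial>M) \<partial>M)"
    by (subst nn_integral_distr) auto
  finally show ?thesis .
qed

end

context raft begin

lemma XD: "distributed M lborel (X (Suc k)) (exponential_density l)"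
  using dist by simp

lemma Xgt: "a \<ge> 0 \<Longrightarrow> prob {\<omega>\<in>space M. a < X (Suc k) \<omega>} = exp (- a * l)"
  using exponential_distributedD_gt[OF XD _ l] by simp

lemma Xle: "a \<ge> 0 \<Longrightarrow> prob {\<omega>\<in>space M. X (Suc k) \<omega> \<le> a} = 1 - exp (- a * l)"
  using exponential_distributedD_le[OF XD _ l] by simp

lemma XmS[measurable]: "X (Suc k) \<in> borel_measurable M"
  using Xm by simp

lemma Xpos1: "AE \<omega> in M. 0 < X (Suc k) \<omega>"
proof -
  have "prob {\<omega>\<in>space M. 0 < X (Suc k) \<omega>} = 1" using Xgt[of 0] by simp
  then show ?thesis by (subst prob_Collect_eq_1[symmetric]) auto
qed

lemma Xpos: "AE \<omega> in M. \<forall>i. 0 < X (Suc i) \<omega>"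
  using Xpos1 by (simp add: AE_all_countable)

lemma Emin:
  assumes m: "m \<ge> 0"
  shows "(\<integral>\<^sup>+\<omega>. ennreal (min (X (Suc k) \<omega>) m) \<partial>M) = ennreal ((1 - exp (- m * l)) / l)"
proof -
  define F where "F x = - (x + 1 / l) * exp (- x * l)" for x
  have "(\<integral>\<^sup>+\<omega>. ennreal (min (X (Suc k) \<omega>) m) \<partial>M) =
     (\<integral>\<^sup>+\<omega>. ennreal (X (Suc k) \<omega> * indicator {0..m} (X (Suc k) \<omega>)) + ennreal m * indicator {\<omega>\<in>space M. m < X (Suc k) \<omega>} \<omega> \<partial>M)"
    apply (rule nn_integral_cong_AE) using Xpos1[of k] AE_space apply eventually_elim
    by (auto simp: indicator_def)
  also have "\<dots> = (\<integral>\<^sup>+\<omega>. ennreal (X (Suc k) \<omega> * indicator {0..m} (X (Suc k) \<omega>)) \<partial>M) + ennreal m * emeasure M {\<omega>\<in>space M. m < X (Suc k) \<omega>}"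
    by (subst nn_integral_add) (auto simp: nn_integral_cmult)
  also have "(\<integral>\<^sup>+\<omega>. ennreal (X (Suc k) \<omega> * indicator {0..m} (X (Suc k) \<omega>)) \<partial>M)
       = (\<integral>\<^sup>+x. ennreal (exponential_density l x) * ennreal (x * indicator {0..m} x) \<partial>lborel)"
    by (subst distributed_nn_integral[OF XD]) auto
  also have "\<dots> = (\<integral>\<^sup>+x. ennreal (l * exp (- x * l) * x) * indicator {0..m} x \<partial>lborel)"
    using l by (intro nn_integral_cong) (auto simp: exponential_density_def indicator_def ennreal_mult)
  also have "\<dots> = F m - F 0"
  proof (rule nn_integral_FTC_Icc)
    show "(\<lambda>x. l * exp (- x * l) * x) \<in> borel_measurable borel" by measurable
  next
    fix x assume "x \<in> {0..m}"
    show "DERIV F x :> l * exp (- x * l) * x"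
      unfolding F_def by (rule derivative_eq_intros refl | simp)+ (use l in \<open>simp add: field_simps\<close>)
  next
    fix x :: real assume "x \<in> {0..m}" then show "0 \<le> l * exp (- x * l) * x" using l by auto
  qed (use m in auto)
  also have "emeasure M {\<omega>\<in>space M. m < X (Suc k) \<omega>} = ennreal (exp (- m * l))"
    using Xgt[OF m, of k] by (simp add: emeasure_eq_measure)
  finally have "(\<integral>\<^sup>+\<omega>. ennreal (min (X (Suc k) \<omega>) m) \<partial>M) = ennreal (F m - F 0) + ennreal m * ennreal (exp (- m * l))" .
  also have "\<dots> = ennreal (F m - F 0 + m * exp (- m * l))"
  proof -
    have e: "1 + l * m \<le> exp (l * m)" by (rule exp_ge_add_one_self)
    have "exp (- m * l) * (1 + l * m) \<le> exp (- m * l) * exp (l * m)"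
      by (intro mult_left_mono e) auto
    also have "\<dots> = 1" by (simp add: exp_minus_inverse mult.commute)
    finally have "0 \<le> F m - F 0" using l by (simp add: F_def field_simps)
    then show ?thesis
      by (subst ennreal_plus) (use m l in \<open>auto simp: ennreal_mult\<close>)
  qed
  also have "F m - F 0 + m * exp (- m * l) = (1 - exp (- m * l)) / l"
    using l by (simp add: F_def field_simps)
  finally show ?thesis .
qed

end

context raft begin

lemma oneD_aux:
  assumes u: "u > 0" and x: "x \<ge> 0"
  shows "ennreal (u - min x r) + ennreal (min x (min r u)) = ennreal u"
proof (cases "x \<le> min r u")
  case True then show ?thesis using x by (subst ennreal_plus[symmetric]) auto
next
  case False
  show ?thesis
  proof (cases "r \<le> u")
    case True then show ?thesis using False x r by (subst ennreal_plus[symmetric]) auto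
  next
    case F2: False
    then have "u - min x r \<le> 0" using False by auto
    then have "ennreal (u - min x r) = 0" by (simp add: ennreal_eq_0_iff)
    then show ?thesis using False F2 by auto
  qed
qed

lemma oneD1:
  "(\<integral>\<^sup>+\<omega>. (if X (Suc k) \<omega> \<le> r \<and> c + X (Suc k) \<omega> \<le> s then 1 else 0) \<partial>M)
     + ennreal l * (\<integral>\<^sup>+\<omega>. ennreal (s - c - min (X (Suc k) \<omega>) r) \<partial>M) = ennreal (l * (s - c))"
proof (cases "s - c > 0")
  case False
  have 1: "(\<integral>\<^sup>+\<omega>. (if X (Suc k) \<omega> \<le> r \<and> c + X (Suc k) \<omega> \<le> s then 1 else 0) \<partial>M) = 0"
    apply (subst nn_integral_0_iff_AE) apply simp
    using Xpos1[of k] apply eventually_elim using False by auto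
  have 2: "(\<integral>\<^sup>+\<omega>. ennreal (s - c - min (X (Suc k) \<omega>) r) \<partial>M) = 0"
    apply (subst nn_integral_0_iff_AE) apply simp
    using Xpos1[of k] apply eventually_elim using False r by (auto simp: ennreal_eq_0_iff)
  show ?thesis using False 1 2 l by (simp add: ennreal_eq_0_iff mult_nonneg_nonpos)
next
  case True
  define u where "u = s - c"
  define m where "m = min r u"
  have u: "u > 0" and m: "m > 0" using True r by (auto simp: u_def m_def)
  define e where "e = exp (- m * l)"
  have "(\<integral>\<^sup>+\<omega>. (if X (Suc k) \<omega> \<le> r \<and> c + X (Suc k) \<omega> \<le> s then 1 else 0) \<partial>M)
      = emeasure M {\<omega>\<in>space M. X (Suc k) \<omega> \<le> m}"
    (is "?L = _")
  proof -
    have "?L = (\<integral>\<^sup>+\<omega>. indicator {\<omega>\<in>space M. X (Suc k) \<omega> \<le> m} \<omega> \<partial>M)"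
      proof (intro nn_integral_cong)
      fix \<omega> assume "\<omega> \<in> space M"
      have "(X (Suc k) \<omega> \<le> r \<and> c + X (Suc k) \<omega> \<le> s) = (X (Suc k) \<omega> \<le> m)"
        unfolding m_def u_def by linarith
      then show "(if X (Suc k) \<omega> \<le> r \<and> c + X (Suc k) \<omega> \<le> s then 1 else 0) = indicator {\<omega>\<in>space M. X (Suc k) \<omega> \<le> m} \<omega>"
        using \<open>\<omega> \<in> space M\<close> by (simp add: indicator_def)
    qed
    also have "\<dots> = emeasure M {\<omega>\<in>space M. X (Suc k) \<omega> \<le> m}"
      by (rule nn_integral_indicator) measurable
    finally show ?thesis .
  qed
  also have "\<dots> = ennreal (1 - e)"
    using Xle[of m k] m by (simp add: emeasure_eq_measure e_def)
  finally have 1: "(\<integral>\<^sup>+\<omega>. (if X (Suc k) \<omega> \<le> r \<and> c + X (Suc k) \<omega> \<le> s then 1 else 0) \<partial>M) = ennreal (1 - e)" .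
  define A where "A = (\<integral>\<^sup>+\<omega>. ennreal (s - c - min (X (Suc k) \<omega>) r) \<partial>M)"
  have "A + ennreal ((1 - e) / l) = (\<integral>\<^sup>+\<omega>. ennreal (u - min (X (Suc k) \<omega>) r) + ennreal (min (X (Suc k) \<omega>) m) \<partial>M)"
    unfolding A_def e_def using m by (subst nn_integral_add) (auto simp: Emin u_def)
  also have "\<dots> = (\<integral>\<^sup>+\<omega>. ennreal u \<partial>M)"
    apply (rule nn_integral_cong_AE) using Xpos1[of k] apply eventually_elim
    using oneD_aux[OF u] by (auto simp: m_def)
  also have "\<dots> = ennreal u" by (simp add: emeasure_space_1)
  finally have Ab: "A + ennreal ((1 - e) / l) = ennreal u" .
  have e1: "e \<le> 1" "0 < e" using m l by (auto simp: e_def)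
  have b0: "0 \<le> (1 - e) / l" using e1 l by auto
  have "ennreal ((1 - e) / l) \<le> ennreal u" using Ab by (metis le_iff_add add.commute)
  then have bu: "(1 - e) / l \<le> u" using u by (simp add: ennreal_le_iff)
  have "A = ennreal u - ennreal ((1 - e) / l)"
    using Ab by (metis ennreal_add_diff_cancel_right ennreal_neq_top)
  also have "\<dots> = ennreal (u - (1 - e) / l)" using b0 by (simp add: ennreal_minus)
  finally have A: "A = ennreal (u - (1 - e) / l)" .
  have "ennreal (1 - e) + ennreal l * A = ennreal (1 - e + l * (u - (1 - e) / l))"
  proof -
    have "ennreal l * A = ennreal (l * (u - (1 - e) / l))"
      unfolding A using l bu by (intro ennreal_mult[symmetric]) auto
    moreover have "ennreal (1 - e) + ennreal (l * (u - (1 - e) / l)) = ennreal (1 - e + l * (u - (1 - e) / l))"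
      using l bu e1 by (intro ennreal_plus[symmetric]) auto
    ultimately show ?thesis by simp
  qed
  also have "1 - e + l * (u - (1 - e) / l) = l * (s - c)" using l by (simp add: u_def field_simps)
  finally show ?thesis using 1 unfolding A_def by simp
qed

lemma oneD2:
  "(\<integral>\<^sup>+\<omega>. (if r < X (Suc k) \<omega> \<and> z \<le> u then 1 else 0) \<partial>M) = ennreal (exp (- r * l)) * (if z \<le> u then 1 else 0)"
proof (cases "z \<le> u")
  case True
  have "(\<integral>\<^sup>+\<omega>. (if r < X (Suc k) \<omega> \<and> z \<le> u then 1 else 0) \<partial>M) = emeasure M {\<omega>\<in>space M. r < X (Suc k) \<omega>}"
    (is "?L = _")
  proof -
    have "?L = (\<integral>\<^sup>+\<omega>. indicator {\<omega>\<in>space M. r < X (Suc k) \<omega>} \<omega> \<partial>M)"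
      by (intro nn_integral_cong) (auto simp: indicator_def True)
    also have "\<dots> = emeasure M {\<omega>\<in>space M. r < X (Suc k) \<omega>}"
      by (rule nn_integral_indicator) measurable
    finally show ?thesis .
  qed
  then show ?thesis using Xgt[of r k] r True by (simp add: emeasure_eq_measure)
qed simp

lemma PD:
  "(\<integral>\<^sup>+\<omega>. (if X (Suc k) \<omega> \<le> r \<and> S k \<omega> + X (Suc k) \<omega> \<le> s then 1 else 0) + ennreal l * ennreal (s - S (Suc k) \<omega>) \<partial>M)
   = (\<integral>\<^sup>+\<omega>. ennreal (l * (s - S k \<omega>)) \<partial>M)"
proof -
  have "(\<integral>\<^sup>+\<omega>. (if X (Suc k) \<omega> \<le> r \<and> S k \<omega> + X (Suc k) \<omega> \<le> s then 1 else 0) + ennreal l * ennreal (s - S (Suc k) \<omega>) \<partial>M)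
    = (\<integral>\<^sup>+\<omega>. (\<lambda>x z. (if x \<le> r \<and> z + x \<le> s then 1 else 0) + ennreal l * ennreal (s - z - min x r)) (X (Suc k) \<omega>) (S k \<omega>) \<partial>M)"
    by (simp add: S_Suc diff_diff_eq)
  also have "\<dots> = (\<integral>\<^sup>+\<omega>. (\<integral>\<^sup>+\<omega>'. (\<lambda>x z. (if x \<le> r \<and> z + x \<le> s then 1 else 0) + ennreal l * ennreal (s - z - min x r)) (X (Suc k) \<omega>') (S k \<omega>) \<partial>M) \<partial>M)"
    by (rule indep_pair_nn[OF indep_XS]) measurable
  also have "\<dots> = (\<integral>\<^sup>+\<omega>. ennreal (l * (s - S k \<omega>)) \<partial>M)"
    by (intro nn_integral_cong, subst nn_integral_add) (auto simp: nn_integral_cmult oneD1)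
  finally show ?thesis .
qed

lemma PA:
  "(\<integral>\<^sup>+\<omega>. (if r < X (Suc k) \<omega> \<and> S k \<omega> \<le> u then 1 else 0) \<partial>M)
   = ennreal (exp (- r * l)) * emeasure M {\<omega>\<in>space M. S k \<omega> \<le> u}"
proof -
  have meas: "case_prod (\<lambda>x z. (if r < x \<and> z \<le> u then 1 else 0 :: ennreal)) \<in> borel_measurable (borel \<Otimes>\<^sub>M borel)"
    by measurable
  have "(\<integral>\<^sup>+\<omega>. (if r < X (Suc k) \<omega> \<and> S k \<omega> \<le> u then 1 else 0) \<partial>M)
    = (\<integral>\<^sup>+\<omega>. (\<integral>\<^sup>+\<omega>'. (if r < X (Suc k) \<omega>' \<and> S k \<omega> \<le> u then 1 else 0) \<partial>M) \<partial>M)"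
    using indep_pair_nn[OF indep_XS meas] by simp
  also have "\<dots> = (\<integral>\<^sup>+\<omega>. ennreal (exp (- r * l)) * indicator {\<omega>\<in>space M. S k \<omega> \<le> u} \<omega> \<partial>M)"
    by (intro nn_integral_cong) (simp add: oneD2 indicator_def)
  also have "\<dots> = ennreal (exp (- r * l)) * emeasure M {\<omega>\<in>space M. S k \<omega> \<le> u}"
    by (subst nn_integral_cmult) auto
  finally show ?thesis .
qed

end

context raft begin

definition p :: "nat \<Rightarrow> real \<Rightarrow> real" where
  "p k s = prob {\<omega>\<in>space M. S k \<omega> \<le> s}"
definition ph :: "nat \<Rightarrow> real \<Rightarrow> real" where
  "ph k s = enn2real (\<integral>\<^sup>+\<omega>. ennreal (s - S k \<omega>) \<partial>M)"

lemma S_nonneg: "AE \<omega> in M. \<forall>k. 0 \<le> S k \<omega>"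
  using Xpos
proof eventually_elim
  case (elim \<omega>)
  show ?case
  proof
    fix k show "0 \<le> S k \<omega>"
      unfolding S_def
    proof (intro sum_nonneg)
      fix i assume "i \<in> {1..k}"
      then obtain j where "i = Suc j" by (cases i) auto
      then show "0 \<le> min (X i \<omega>) r" using elim r by (auto intro: less_imp_le)
    qed
  qed
qed

lemma p_nonneg: "0 \<le> p k s" by (simp add: p_def)

lemma p_neg: assumes "s < 0" shows "p k s = 0"
  unfolding p_def
proof (subst prob_eq_0)
  show "AE x in M. x \<notin> {\<omega> \<in> space M. S k \<omega> \<le> s}"
    using S_nonneg by eventually_elim (use assms in \<open>smt (verit) mem_Collect_eq\<close>)
qed simp

lemma p_0: "p 0 s = (if 0 \<le> s then 1 else 0)"
  by (auto simp: p_def prob_space)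

lemma F1:
  "(\<integral>\<^sup>+\<omega>. ennreal (s - S k \<omega>) \<partial>M) = ennreal (ph k s)"
  "0 \<le> ph k s" "ph k s \<le> max s 0 * p k s"
proof -
  have le: "(\<integral>\<^sup>+\<omega>. ennreal (s - S k \<omega>) \<partial>M) \<le> (\<integral>\<^sup>+\<omega>. ennreal (max s 0) * indicator {\<omega>\<in>space M. S k \<omega> \<le> s} \<omega> \<partial>M)"
    apply (rule nn_integral_mono_AE) using S_nonneg AE_space apply eventually_elim
    by (auto simp: indicator_def ennreal_eq_0_iff intro!: ennreal_leI)
  also have "\<dots> = ennreal (max s 0) * emeasure M {\<omega>\<in>space M. S k \<omega> \<le> s}"
    by (subst nn_integral_cmult_indicator) auto
  also have "\<dots> = ennreal (max s 0 * p k s)"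
    by (simp add: p_def emeasure_eq_measure ennreal_mult)
  finally have le2: "(\<integral>\<^sup>+\<omega>. ennreal (s - S k \<omega>) \<partial>M) \<le> ennreal (max s 0 * p k s)" .
  then have fin: "(\<integral>\<^sup>+\<omega>. ennreal (s - S k \<omega>) \<partial>M) \<noteq> top"
    by (metis ennreal_neq_top neq_top_trans)
  then show eq: "(\<integral>\<^sup>+\<omega>. ennreal (s - S k \<omega>) \<partial>M) = ennreal (ph k s)"
    unfolding ph_def by (simp add: ennreal_enn2real_if)
  show "0 \<le> ph k s" by (simp add: ph_def)
  show "ph k s \<le> max s 0 * p k s"
    using le2 unfolding eq by (simp add: ennreal_le_iff p_nonneg)
qed

lemma ph_0: "ph 0 s = max s 0"
  by (cases "0 \<le> s") (auto simp: ph_def emeasure_space_1 ennreal_neg)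

definition pA :: "nat \<Rightarrow> real \<Rightarrow> real" where
  "pA k u = prob {\<omega>\<in>space M. r < X (Suc k) \<omega> \<and> S k \<omega> \<le> u}"
definition pD :: "nat \<Rightarrow> real \<Rightarrow> real" where
  "pD k s = prob {\<omega>\<in>space M. X (Suc k) \<omega> \<le> r \<and> S k \<omega> + X (Suc k) \<omega> \<le> s}"

lemma F2: "pD k s + l * ph (Suc k) s = l * ph k s"
proof -
  have "(\<integral>\<^sup>+\<omega>. (if X (Suc k) \<omega> \<le> r \<and> S k \<omega> + X (Suc k) \<omega> \<le> s then 1 else 0) \<partial>M)
      = (\<integral>\<^sup>+\<omega>. indicator {\<omega>\<in>space M. X (Suc k) \<omega> \<le> r \<and> S k \<omega> + X (Suc k) \<omega> \<le> s} \<omega> \<partial>M)"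
    by (intro nn_integral_cong) (simp add: indicator_def)
  also have "\<dots> = ennreal (pD k s)"
    unfolding pD_def by (subst nn_integral_indicator) (auto simp: emeasure_eq_measure)
  finally have i1: "(\<integral>\<^sup>+\<omega>. (if X (Suc k) \<omega> \<le> r \<and> S k \<omega> + X (Suc k) \<omega> \<le> s then 1 else 0) \<partial>M) = ennreal (pD k s)" .
  have cm: "(\<integral>\<^sup>+\<omega>. ennreal (l * (s - S k \<omega>)) \<partial>M) = ennreal l * (\<integral>\<^sup>+\<omega>. ennreal (s - S k \<omega>) \<partial>M)"
      using l by (simp add: ennreal_mult' nn_integral_cmult)
  have "ennreal (pD k s) + ennreal l * ennreal (ph (Suc k) s) = ennreal l * ennreal (ph k s)"
    using PD[of k s] i1 F1(1)[of s "Suc k"] F1(1)[of s k] cm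
    by (subst (asm) nn_integral_add) (auto simp: nn_integral_cmult ennreal_mult'[symmetric] ennreal_mult)
  then have "ennreal (pD k s + l * ph (Suc k) s) = ennreal (l * ph k s)"
    using l F1(2)[of k s] F1(2)[of "Suc k" s]
    by (simp add: ennreal_mult ennreal_plus pD_def)
  then show ?thesis
    using l F1(2)[of k s] F1(2)[of "Suc k" s]
    by (subst (asm) ennreal_inj) (auto simp: pD_def)
qed

lemma F3: "pA k u = exp (- r * l) * p k u"
proof -
  have "(\<integral>\<^sup>+\<omega>. (if r < X (Suc k) \<omega> \<and> S k \<omega> \<le> u then 1 else 0) \<partial>M)
      = (\<integral>\<^sup>+\<omega>. indicator {\<omega>\<in>space M. r < X (Suc k) \<omega> \<and> S k \<omega> \<le> u} \<omega> \<partial>M)"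
    by (intro nn_integral_cong) (simp add: indicator_def)
  also have "\<dots> = ennreal (pA k u)"
    unfolding pA_def by (subst nn_integral_indicator) (auto simp: emeasure_eq_measure)
  finally have "ennreal (pA k u) = ennreal (exp (- r * l)) * ennreal (p k u)"
    using PA[of k u] by (simp add: p_def emeasure_eq_measure)
  then have "ennreal (pA k u) = ennreal (exp (- r * l) * p k u)"
    by (simp add: ennreal_mult p_nonneg)
  then show ?thesis by (subst (asm) ennreal_inj) (auto simp: pA_def p_nonneg)
qed

lemma F4: "p (Suc k) s = pA k (s - r) + pD k s"
proof -
  have "{\<omega>\<in>space M. S (Suc k) \<omega> \<le> s} =
     {\<omega>\<in>space M. r < X (Suc k) \<omega> \<and> S k \<omega> \<le> s - r} \<union> {\<omega>\<in>space M. X (Suc k) \<omega> \<le> r \<and> S k \<omega> + X (Suc k) \<omega> \<le> s}"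
    by (auto simp: S_Suc min_def)
  then show ?thesis
    unfolding p_def pA_def pD_def
    by (simp, subst finite_measure_Union) auto
qed

end

context raft begin

lemma p_le1: "p k s \<le> 1" by (simp add: p_def)

lemma partial:
  "(\<Sum>k<K. p (Suc k) s) = exp (- r * l) * (\<Sum>k<K. p k (s - r)) + l * (max s 0 - ph K s)"
proof (induction K)
  case 0 then show ?case by (simp add: ph_0)
next
  case (Suc K)
  have "p (Suc K) s = exp (- r * l) * p K (s - r) + (l * ph K s - l * ph (Suc K) s)"
    using F4[of K s] F3[of K "s - r"] F2[of K s] by simp
  then show ?case using Suc by (simp add: algebra_simps)
qed

lemma bound:
  "s < real j * r \<Longrightarrow> (\<Sum>k<K. p (Suc k) s) \<le> real j * (1 + l * max s 0)"
proof (induction j arbitrary: s K)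
  case 0
  then have "s < 0" by simp
  then show ?case by (simp add: p_neg)
next
  case (Suc j)
  have e: "exp (- r * l) \<le> 1" using r l by simp
  have sn: "0 \<le> (\<Sum>k<K. p k (s - r))" by (intro sum_nonneg p_nonneg)
  have "(\<Sum>k<K. p k (s - r)) \<le> (\<Sum>k<Suc K. p k (s - r))"
    by (simp add: p_nonneg)
  also have "\<dots> = p 0 (s - r) + (\<Sum>k<K. p (Suc k) (s - r))"
    by (subst sum.lessThan_Suc_shift) simp
  also have "\<dots> \<le> 1 + real j * (1 + l * max (s - r) 0)"
    using Suc.IH[of "s - r" K] Suc.prems p_le1[of 0 "s - r"] by (simp add: algebra_simps)
  also have "\<dots> \<le> 1 + real j * (1 + l * max s 0)"
    using l r by (intro add_left_mono mult_left_mono) (auto intro!: mult_left_mono)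
  finally have A: "(\<Sum>k<K. p k (s - r)) \<le> 1 + real j * (1 + l * max s 0)" .
  have "(\<Sum>k<K. p (Suc k) s) \<le> (\<Sum>k<K. p k (s - r)) + l * max s 0"
  proof -
    have "exp (- r * l) * (\<Sum>k<K. p k (s - r)) \<le> (\<Sum>k<K. p k (s - r))"
      using e sn by (simp add: mult_left_le_one_le)
    moreover have "0 \<le> l * ph K s" using F1(2)[of K s] l by simp
    ultimately show ?thesis unfolding partial by (simp add: right_diff_distrib)
  qed
  also have "\<dots> \<le> real (Suc j) * (1 + l * max s 0)"
    using A by (simp add: algebra_simps)
  finally show ?case .
qed

lemma summable_p: "summable (\<lambda>k. p (Suc k) s)"
proof -
  obtain j where j: "s < real j * r" using ex_less_of_nat_mult[OF r] by blast
  show ?thesis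
  proof (rule bounded_imp_summable)
    fix n show "(\<Sum>k\<le>n. p (Suc k) s) \<le> real j * (1 + l * max s 0)"
      using bound[OF j, of "Suc n"] by (simp add: lessThan_Suc_atMost)
  qed (rule p_nonneg)
qed

lemma summable_p0: "summable (\<lambda>k. p k s)"
  using summable_p summable_Suc_iff by blast

lemma ph_lim: "(\<lambda>K. ph K s) \<longlonglongrightarrow> 0"
proof -
  have "(\<lambda>k. p (Suc k) s) \<longlonglongrightarrow> 0" by (rule summable_LIMSEQ_zero[OF summable_p])
  then have h: "(\<lambda>k. max s 0 * p (Suc k) s) \<longlonglongrightarrow> 0"
    by (simp add: tendsto_mult_right_zero)
  have "(\<lambda>k. ph (Suc k) s) \<longlonglongrightarrow> 0"
    by (rule real_tendsto_sandwich[where f="\<lambda>_. 0" and h="\<lambda>k. max s 0 * p (Suc k) s", OF _ _ tendsto_const h])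
       (auto intro!: always_eventually F1(2) F1(3))
  then show ?thesis by (rule LIMSEQ_imp_Suc)
qed

definition nsum :: "real \<Rightarrow> real" where "nsum s = (\<Sum>k. p (Suc k) s)"
definition FF :: "real \<Rightarrow> real" where "FF t = exp (- r * l) * (\<Sum>k. p k (t - r))"

lemma nsum_eq: "nsum s = FF s + l * max s 0"
proof -
  have "(\<lambda>K. \<Sum>k<K. p (Suc k) s) \<longlonglongrightarrow> nsum s"
    unfolding nsum_def by (rule summable_LIMSEQ[OF summable_p])
  moreover have "(\<lambda>K. \<Sum>k<K. p (Suc k) s) \<longlonglongrightarrow> FF s + l * max s 0"
    unfolding partial FF_def
    by (intro tendsto_intros summable_LIMSEQ[OF summable_p0] ph_lim[THEN tendsto_diff[OF tendsto_const], simplified])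
  ultimately show ?thesis by (rule LIMSEQ_unique)
qed

lemma FF_rec: "FF t = exp (- r * l) * (p 0 (t - r) + nsum (t - r))"
  unfolding FF_def nsum_def using suminf_split_head[OF summable_p0, of "t - r"] by simp

lemma FF_small: "t < r \<Longrightarrow> FF t = 0"
  unfolding FF_def by (simp add: p_neg)

lemma FF_formula:
  "real j * r \<le> t \<Longrightarrow> t < real (j + 1) * r \<Longrightarrow>
    FF t = (\<Sum>m=1..j. exp (- l * real m * r) * (1 + l * (t - real m * r)))"
proof (induction j arbitrary: t)
  case 0 then show ?case by (simp add: FF_small)
next
  case (Suc j)
  have "r \<le> real (Suc j) * r" using r by (simp add: algebra_simps)
  then have tr: "r \<le> t" using Suc.prems by linarith
  have IH: "FF (t - r) = (\<Sum>m=1..j. exp (- l * real m * r) * (1 + l * (t - r - real m * r)))"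
    using Suc.prems by (intro Suc.IH) (auto simp: algebra_simps)
  have "FF t = exp (- r * l) * (1 + FF (t - r) + l * (t - r))"
    using tr FF_rec[of t] nsum_eq[of "t - r"] by (simp add: p_0 algebra_simps)
  also have "\<dots> = exp (- r * l) * (1 + l * (t - r)) + (\<Sum>m=1..j. exp (- r * l) * (exp (- l * real m * r) * (1 + l * (t - r - real m * r))))"
    by (simp add: IH sum_distrib_left algebra_simps)
  also have "(\<Sum>m=1..j. exp (- r * l) * (exp (- l * real m * r) * (1 + l * (t - r - real m * r))))
       = (\<Sum>m=1..j. exp (- l * real (Suc m) * r) * (1 + l * (t - real (Suc m) * r)))"
    by (intro sum.cong refl) (simp add: algebra_simps flip: exp_add)
  also have "\<dots> = (\<Sum>m=2..Suc j. exp (- l * real m * r) * (1 + l * (t - real m * r)))"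
    by (rule sum.reindex_bij_witness[where i="\<lambda>m. m - 1" and j="Suc"]) auto
  also have "exp (- r * l) * (1 + l * (t - r)) + \<dots> = (\<Sum>m=1..Suc j. exp (- l * real m * r) * (1 + l * (t - real m * r)))"
    by (subst (2) sum.atLeast_Suc_atMost) (auto simp: algebra_simps numeral_2_eq_2)
  finally show ?case .
qed

end


lemma Greatest_as_Least:
  fixes P :: "nat \<Rightarrow> bool"
  shows "(GREATEST n. P n) = (if \<exists>x. P x \<and> (\<forall>y. P y \<longrightarrow> y \<le> x) then (LEAST x. P x \<and> (\<forall>y. P y \<longrightarrow> y \<le> x)) else (THE x::nat. False))"
proof (cases "\<exists>x. P x \<and> (\<forall>y. P y \<longrightarrow> y \<le> x)")
  case True
  then obtain x where x: "P x" "\<forall>y. P y \<longrightarrow> y \<le> x" by blast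
  have g: "(GREATEST n. P n) = x" using x by (intro Greatest_equality) auto
  have "(LEAST x. P x \<and> (\<forall>y. P y \<longrightarrow> y \<le> x)) = x"
    using x by (intro Least_equality) auto
  then show ?thesis using True g by simp
next
  case False
  then have "(\<lambda>x. P x \<and> (\<forall>y. P y \<longrightarrow> y \<le> x)) = (\<lambda>x. False)" by (intro ext) blast
  then show ?thesis using False unfolding Greatest_def by simp
qed

lemma measurable_Greatest_nat:
  fixes P :: "nat \<Rightarrow> 'a \<Rightarrow> bool"
  assumes [measurable]: "\<And>n. Measurable.pred M (P n)"
  shows "(\<lambda>\<omega>. GREATEST n. P n \<omega>) \<in> measurable M (count_space UNIV)"
  unfolding Greatest_as_Least by measurable

lemma card_filter_sum:
  "real (card {k\<in>{1..N}. P k}) = (\<Sum>k<N. if P (Suc k) then 1 else 0)"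
proof (induction N)
  case 0 then show ?case by simp
next
  case (Suc N)
  have "{k\<in>{1..Suc N}. P k} = {k\<in>{1..N}. P k} \<union> (if P (Suc N) then {Suc N} else {})"
    by (auto simp: le_Suc_eq)
  then show ?case using Suc by (auto simp: card_insert_if)
qed

context raft begin

lemma meas_A: "(\<lambda>\<omega>. real (raft_A X r t \<omega>)) \<in> borel_measurable M"
proof -
  have N: "(\<lambda>\<omega>. raft_N X r t \<omega>) \<in> measurable M (count_space UNIV)"
    unfolding raft_N_def raft_Y_def S_def[symmetric]
    by (rule measurable_Greatest_nat) measurable
  have g: "(\<lambda>\<omega>. \<Sum>k<n. if r < X (Suc k) \<omega> then 1 else 0 :: real) \<in> borel_measurable M" for n
    by measurable
  have "(\<lambda>\<omega>. (\<lambda>n \<omega>. \<Sum>k<n. if r < X (Suc k) \<omega> then 1 else 0 :: real) (raft_N X r t \<omega>) \<omega>) \<in> borel_measurable M"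
    by (rule measurable_compose_countable'[OF g N]) auto
  then show ?thesis unfolding raft_A_def card_filter_sum by simp
qed

end

context raft begin

lemma AE_unbounded: "AE \<omega> in M. \<exists>n. t < S n \<omega>"
proof -
  define B where "B = {\<omega>\<in>space M. \<forall>n. S n \<omega> \<le> t}"
  have B[measurable]: "B \<in> sets M" unfolding B_def by measurable
  have "(\<lambda>n. p n t) \<longlonglongrightarrow> 0" by (rule summable_LIMSEQ_zero[OF summable_p0])
  moreover have "\<forall>n\<ge>0. prob B \<le> p n t"
    unfolding p_def B_def by (auto intro!: finite_measure_mono)
  ultimately have "prob B \<le> 0" by (intro LIMSEQ_le_const) auto
  then have "prob B = 0" using measure_nonneg[of M B] by linarith
  then have "AE \<omega> in M. \<omega> \<notin> B" using prob_eq_0[OF B] by simp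
  then show ?thesis using AE_space by eventually_elim (auto simp: B_def not_le)
qed

lemma AE_eq:
  assumes t: "0 \<le> t"
  shows "AE \<omega> in M. ennreal (real (raft_A X r t \<omega>)) = (\<Sum>k. indicator {\<omega>\<in>space M. r < X (Suc k) \<omega> \<and> S (Suc k) \<omega> \<le> t} \<omega>)"
  using Xpos AE_unbounded[of t] AE_space
proof eventually_elim
  case (elim \<omega>)
  then have pos: "\<And>i. 0 < X (Suc i) \<omega>" and sp: "\<omega> \<in> space M" by auto
  obtain n0 where n0: "t < S n0 \<omega>" using elim by auto
  have "S n \<omega> < S (Suc n) \<omega>" for n using pos[of n] r by (simp add: S_Suc)
  then have sm: "strict_mono (\<lambda>n. S n \<omega>)" by (rule strict_monoI_Suc)
  have mono: "n \<le> m \<Longrightarrow> S n \<omega> \<le> S m \<omega>" for n m using strict_mono_less_eq[OF sm, of n m] by simp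
  define N where "N = (GREATEST n. S n \<omega> \<le> t)"
  have bnd: "\<forall>y. S y \<omega> \<le> t \<longrightarrow> y \<le> n0"
  proof (intro allI impI)
    fix y assume "S y \<omega> \<le> t"
    show "y \<le> n0"
    proof (rule ccontr)
      assume "\<not> y \<le> n0" then have "S n0 \<omega> \<le> S y \<omega>" by (intro mono) auto
      then show False using n0 \<open>S y \<omega> \<le> t\<close> by linarith
    qed
  qed
  have t0: "S 0 \<omega> \<le> t" using t by simp
  have SN: "S N \<omega> \<le> t" unfolding N_def by (rule GreatestI_nat[where P="\<lambda>n. S n \<omega> \<le> t", OF t0 bnd[rule_format]])
  have iff: "S k \<omega> \<le> t \<longleftrightarrow> k \<le> N" for k
  proof
    assume "S k \<omega> \<le> t" then show "k \<le> N" unfolding N_def by (rule Greatest_le_nat[where P="\<lambda>n. S n \<omega> \<le> t", OF _ bnd[rule_format]])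
  next
    assume "k \<le> N" then show "S k \<omega> \<le> t" using mono[of k N] SN by linarith
  qed
  have rN: "raft_N X r t \<omega> = N"
    unfolding raft_N_def raft_Y_def N_def S_def ..
  have "(\<Sum>k. indicator {\<omega>\<in>space M. r < X (Suc k) \<omega> \<and> S (Suc k) \<omega> \<le> t} \<omega> :: ennreal)
      = (\<Sum>k<N. indicator {\<omega>\<in>space M. r < X (Suc k) \<omega> \<and> S (Suc k) \<omega> \<le> t} \<omega>)"
    by (rule suminf_finite) (auto simp: iff indicator_def)
  also have "\<dots> = (\<Sum>k<N. ennreal (if r < X (Suc k) \<omega> then 1 else 0))"
    by (intro sum.cong refl) (auto simp: iff indicator_def sp)
  also have "\<dots> = ennreal (\<Sum>k<N. if r < X (Suc k) \<omega> then 1 else 0)"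
    by (rule sum_ennreal) auto
  also have "\<dots> = ennreal (real (raft_A X r t \<omega>))"
    unfolding raft_A_def rN card_filter_sum ..
  finally show ?case by simp
qed

end

context raft begin

lemma EA:
  assumes j1: "real j * r \<le> t" and j2: "t < real (j + 1) * r"
  shows "expectation (\<lambda>\<omega>. real (raft_A X r t \<omega>))
           = (\<Sum>m=1..j. exp (- l * real m * r) * (1 + l * (t - real m * r)))"
proof -
  have "0 \<le> real j * r" using r by simp
  then have t: "0 \<le> t" using j1 by linarith
  have "expectation (\<lambda>\<omega>. real (raft_A X r t \<omega>)) = enn2real (\<integral>\<^sup>+\<omega>. ennreal (real (raft_A X r t \<omega>)) \<partial>M)"
    by (rule integral_eq_nn_integral[OF meas_A]) auto
  also have "(\<integral>\<^sup>+\<omega>. ennreal (real (raft_A X r t \<omega>)) \<partial>M)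
      = (\<integral>\<^sup>+\<omega>. (\<Sum>k. indicator {\<omega>\<in>space M. r < X (Suc k) \<omega> \<and> S (Suc k) \<omega> \<le> t} \<omega>) \<partial>M)"
    by (rule nn_integral_cong_AE[OF AE_eq[OF t]])
  also have "\<dots> = (\<Sum>k. emeasure M {\<omega>\<in>space M. r < X (Suc k) \<omega> \<and> S (Suc k) \<omega> \<le> t})"
    by (subst nn_integral_suminf) (auto simp: nn_integral_indicator)
  also have "\<dots> = (\<Sum>k. ennreal (pA k (t - r)))"
  proof (intro suminf_cong)
    fix k
    have "{\<omega>\<in>space M. r < X (Suc k) \<omega> \<and> S (Suc k) \<omega> \<le> t} = {\<omega>\<in>space M. r < X (Suc k) \<omega> \<and> S k \<omega> \<le> t - r}"
      by (auto simp: S_Suc min_def)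
    then show "emeasure M {\<omega>\<in>space M. r < X (Suc k) \<omega> \<and> S (Suc k) \<omega> \<le> t} = ennreal (pA k (t - r))"
      by (simp add: pA_def emeasure_eq_measure)
  qed
  also have "\<dots> = ennreal (\<Sum>k. pA k (t - r))"
    by (rule suminf_ennreal2) (simp_all add: F3 p_nonneg summable_mult summable_p0)
  also have "(\<Sum>k. pA k (t - r)) = FF t"
    unfolding F3 FF_def by (rule suminf_mult[OF summable_p0])
  finally have "expectation (\<lambda>\<omega>. real (raft_A X r t \<omega>)) = enn2real (ennreal (FF t))" .
  also have "\<dots> = FF t"
    using suminf_nonneg[OF summable_p0 p_nonneg, of "t - r"]
    by (intro enn2real_ennreal) (simp add: FF_def)
  also have "\<dots> = (\<Sum>m=1..j. exp (- l * real m * r) * (1 + l * (t - real m * r)))"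
    by (rule FF_formula[OF j1 j2])
  finally show ?thesis .
qed

end

theorem corollary2:
  fixes M :: "'a measure" and X :: "nat \<Rightarrow> 'a \<Rightarrow> real"
    and l r t :: real and j :: nat
  assumes "prob_space M"
    and "l > 0" and "r > 0"
    and "prob_space.indep_vars M (\<lambda>_. borel) X {1::nat..}"
    and "\<And>k. k \<ge> 1 \<Longrightarrow> distributed M lborel (X k) (exponential_density l)"
    and "real j * r \<le> t" and "t < real (j + 1) * r"
  shows "prob_space.expectation M (\<lambda>\<omega>. real (raft_A X r t \<omega>))
           = (\<Sum>m=1..j. exp (- l * real m * r) * (1 + l * (t - real m * r)))"
proof -
  have "raft M X l r"
    by (intro raft.intro raft_axioms.intro assms(1-4)) (rule assms(5))
  then interpret raft M X l r .
  show ?thesis by (rule EA[OF assms(6,7)])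
qed


end
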